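(* Let $f,g:\mathbb{R}^n\to\mathbb{R}$ be convex functions, and suppose $\nabla f$ exists and is Lipschitz continuous with constant $L(f)>0$. Let $F=f+g$ and let $x^*$ be an optimal solution of $\min_x F(x)$. Fix $0<\beta\le 1$ and $\mu$ with $\beta/L(f)\le\mu\le 1/L(f)$. Run the following algorithm (Alternating linearization method with skipping step) from $x^0=y^0\in\mathbb{R}^n$ and $\lambda^0$ with $-\lambda^0\in\partial g(y^0)$: for $k=0,1,2,\dots$, 1. $x^{k+1}:=\arg\min_x Q(x,y^k)$, where $Q(x,y^k):=f(x)+g(y^k)-\langle\lambda^k,x-y^k\rangle+\frac{1}{2\mu}\|x-y^k\|_2^2$; 2. if $F(x^{k+1})>Q(x^{k+1},y^k)$, then reset $x^{k+1}:=y^k$; 3. $y^{k+1}:=\arg\min_y Q_f(x^{k+1},y)$, where $Q_f(x,y):=f(x)+\langle\nabla f(x),y-x\rangle+\frac{1}{2\mu}\|y-x\|_2^2+g(y)$; 4. $\lambda^{k+1}:=\nabla f(x^{k+1})-(x^{k+1}-y^{k+1})/\mu$. For $k\ge 1$ let $k_n$ denote the number of iterations among the first $k$ iterations (indices $0,\dots,k-1$) in which the inequality $F(x^{j+1})\le Q(x^{j+1},y^j)$ held in step 2 (i.e., no reset occurred). Then for every $k\ge1$, $$F(y^k)-F(x^* )\le\frac{\|x^0-x^*\|^2}{2\mu(k+k_n)}.$$ Consequently $F(y^k)\to F(x^* )$, and the number of iterations needed to obtain $F(y^k)-F(x^* )\le\epsilon$ is $O(1/\epsilon)$ (specifically, it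 suffices that $k\ge \frac{L(f)\|x^0-x^*\|^2}{2\beta\epsilon}$).
   Context: $\partial g(y)$ denotes the subdifferential of the convex function $g$ at $y$. All norms are Euclidean norms. *)

theory Defs
  imports "HOL-Analysis.Analysis"
begin

definition subdifferential :: "('a::real_inner \<Rightarrow> real) \<Rightarrow> 'a \<Rightarrow> 'a set" where
  "subdifferential g y = {s. \<forall>z. g z \<ge> g y + s \<bullet> (z - y)}"

definition alm_Q :: "('a::real_inner \<Rightarrow> real) \<Rightarrow> ('a \<Rightarrow> real) \<Rightarrow> real \<Rightarrow> 'a \<Rightarrow> 'a \<Rightarrow> 'a \<Rightarrow> real" where
  "alm_Q f g \<mu> lam x y = f x + g y - lam \<bullet> (x - y) + (1 / (2 * \<mu>)) * (norm (x - y))\<^sup>2"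

definition alm_Qf :: "('a::real_inner \<Rightarrow> real) \<Rightarrow> ('a \<Rightarrow> 'a) \<Rightarrow> ('a \<Rightarrow> real) \<Rightarrow> real \<Rightarrow> 'a \<Rightarrow> 'a \<Rightarrow> real" where
  "alm_Qf f gf g \<mu> x y = f x + gf x \<bullet> (y - x) + (1 / (2 * \<mu>)) * (norm (y - x))\<^sup>2 + g y"

end

theory Submission
  imports Defs
begin






lemma line_deriv:
  fixes f :: "'a::real_inner \<Rightarrow> real"
  assumes "\<And>x. (f has_derivative (\<lambda>h. gf x \<bullet> h)) (at x)"
  shows "((\<lambda>t. f (x + t *\<^sub>R d)) has_real_derivative (gf (x + t *\<^sub>R d) \<bullet> d)) (at t)"
proof -
  have l: "((\<lambda>t. x + t *\<^sub>R d) has_derivative (\<lambda>h. h *\<^sub>R d)) (at t)"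
    by (auto intro!: derivative_eq_intros)
  have "((\<lambda>t. f (x + t *\<^sub>R d)) has_derivative (\<lambda>h. gf (x + t *\<^sub>R d) \<bullet> (h *\<^sub>R d))) (at t)"
    using has_derivative_compose[OF l assms] by (simp add: o_def)
  moreover have "(\<lambda>h. gf (x + t *\<^sub>R d) \<bullet> (h *\<^sub>R d)) = (*) (gf (x + t *\<^sub>R d) \<bullet> d)"
    by (auto simp: mult.commute)
  ultimately show ?thesis by (simp add: has_field_derivative_def)
qed

lemma grad_ineq:
  fixes f :: "'a::real_inner \<Rightarrow> real"
  assumes cvx: "convex_on UNIV f" and d: "\<And>x. (f has_derivative (\<lambda>h. gf x \<bullet> h)) (at x)"
  shows "f z \<ge> f x + gf x \<bullet> (z - x)"
proof -
  let ?p = "\<lambda>t. f (x + t *\<^sub>R (z - x))"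
  have c: "convex_on UNIV ?p"
  proof (rule convex_onI)
    fix t u s :: real assume "0 < t" "t < 1"
    have "x + ((1 - t) *\<^sub>R u + t *\<^sub>R s) *\<^sub>R (z - x) = (1 - t) *\<^sub>R (x + u *\<^sub>R (z - x)) + t *\<^sub>R (x + s *\<^sub>R (z - x))"
      by (simp add: algebra_simps)
    then show "?p ((1 - t) *\<^sub>R u + t *\<^sub>R s) \<le> (1 - t) * ?p u + t * ?p s"
      using convex_onD[OF cvx, of t "x + u *\<^sub>R (z - x)" "x + s *\<^sub>R (z - x)"] \<open>0<t\<close> \<open>t<1\<close> by simp
  qed simp
  have dd: "(?p has_field_derivative (gf x \<bullet> (z - x))) (at 0 within UNIV)"
    using line_deriv[OF d, of x "z - x" 0] by simp
  have "?p 1 - ?p 0 \<ge> (gf x \<bullet> (z - x)) * (1 - 0)"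
    by (rule convex_on_imp_above_tangent[OF c _ _ _ dd]) auto
  then show ?thesis by simp
qed

lemma descent:
  fixes f :: "'a::real_inner \<Rightarrow> real"
  assumes d: "\<And>x. (f has_derivative (\<lambda>h. gf x \<bullet> h)) (at x)"
    and lip: "L-lipschitz_on UNIV gf"
  shows "f y \<le> f x + gf x \<bullet> (y - x) + L / 2 * (norm (y - x))\<^sup>2"
proof -
  let ?d = "y - x"
  let ?p = "\<lambda>t. f (x + t *\<^sub>R ?d) - t * (gf x \<bullet> ?d) - L / 2 * t^2 * (norm ?d)\<^sup>2"
  have der: "(?p has_real_derivative (gf (x + t *\<^sub>R ?d) \<bullet> ?d - gf x \<bullet> ?d - L * t * (norm ?d)\<^sup>2)) (at t)" for t
    by (rule derivative_eq_intros line_deriv[OF d] refl)+ (simp add: algebra_simps power2_eq_square)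
  have neg: "gf (x + t *\<^sub>R ?d) \<bullet> ?d - gf x \<bullet> ?d - L * t * (norm ?d)\<^sup>2 \<le> 0" if "0 \<le> t" for t
  proof -
    have "gf (x + t *\<^sub>R ?d) \<bullet> ?d - gf x \<bullet> ?d = (gf (x + t *\<^sub>R ?d) - gf x) \<bullet> ?d"
      by (simp add: inner_diff_left)
    also have "\<dots> \<le> norm (gf (x + t *\<^sub>R ?d) - gf x) * norm ?d"
      by (rule order_trans[OF _ Cauchy_Schwarz_ineq2]) simp
    also have "norm (gf (x + t *\<^sub>R ?d) - gf x) \<le> L * (t * norm ?d)"
      using lipschitz_onD[OF lip, of "x + t *\<^sub>R ?d" x] that by (simp add: dist_norm)
    hence "norm (gf (x + t *\<^sub>R ?d) - gf x) * norm ?d \<le> L * (t * norm ?d) * norm ?d"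
      by (simp add: mult_right_mono)
    finally show ?thesis by (simp add: power2_eq_square algebra_simps)
  qed
  have "?p 1 \<le> ?p 0"
  proof (rule DERIV_nonpos_imp_nonincreasing[of 0 1])
    fix t :: real assume "0 \<le> t"
    then show "\<exists>y. (?p has_real_derivative y) (at t) \<and> y \<le> 0"
      using der[of t] neg[of t] by blast
  qed simp
  then show ?thesis by simp
qed

lemma norm_add_sq:
  fixes u v :: "'a::real_inner"
  shows "(norm (u + t *\<^sub>R v))\<^sup>2 = (norm u)\<^sup>2 + 2 * t * (u \<bullet> v) + t^2 * (norm v)\<^sup>2"
  by (simp only: power2_norm_eq_inner inner_add_left inner_add_right inner_scaleR_left inner_scaleR_right inner_commute[of v u])
     (simp add: power2_eq_square algebra_simps)

lemma opt_subgrad: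
  fixes h :: "'a::real_inner \<Rightarrow> real"
  assumes cvx: "convex_on UNIV h" and c: "c \<ge> 0"
    and opt: "\<And>z. h x + a \<bullet> x + c * (norm (x - b))\<^sup>2 \<le> h z + a \<bullet> z + c * (norm (z - b))\<^sup>2"
  shows "h z \<ge> h x - (a + (2 * c) *\<^sub>R (x - b)) \<bullet> (z - x)"
proof -
  define E where "E = h x - h z - a \<bullet> (z - x) - 2 * c * ((x - b) \<bullet> (z - x))"
  define D where "D = (norm (z - x))\<^sup>2"
  have D0: "D \<ge> 0" by (simp add: D_def)
  have key: "E \<le> c * t * D" if t: "0 < t" "t \<le> 1" for t
  proof -
    define w where "w = x + t *\<^sub>R (z - x)"
    have hw: "h w \<le> (1 - t) * h x + t * h z"
    proof (cases "t = 1")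
      case True then show ?thesis by (simp add: w_def)
    next
      case False
      have "w = (1 - t) *\<^sub>R x + t *\<^sub>R z" by (simp add: w_def algebra_simps)
      then show ?thesis using convex_onD[OF cvx, of t x z] t False by simp
    qed
    have nw: "(norm (w - b))\<^sup>2 = (norm (x - b))\<^sup>2 + 2 * t * ((x - b) \<bullet> (z - x)) + t^2 * D"
    proof -
      have eq: "w - b = (x - b) + t *\<^sub>R (z - x)" by (simp add: w_def algebra_simps)
      show ?thesis unfolding eq norm_add_sq D_def by (rule refl)
    qed
    have aw: "a \<bullet> w = a \<bullet> x + t * (a \<bullet> (z - x))" by (simp add: w_def inner_add_right)
    have "h x + a \<bullet> x + c * (norm (x - b))\<^sup>2 \<le> h w + a \<bullet> w + c * (norm (w - b))\<^sup>2" by (rule opt)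
    moreover have "c * (norm (w - b))\<^sup>2 = c * (norm (x - b))\<^sup>2 + 2 * t * (c * ((x - b) \<bullet> (z - x))) + t * (c * t * D)"
      unfolding nw by (simp add: distrib_left power2_eq_square)
    moreover have "(1 - t) * h x = h x - t * h x" by (simp add: algebra_simps)
    moreover have "t * E = t * h x - t * h z - t * (a \<bullet> (z - x)) - 2 * t * (c * ((x - b) \<bullet> (z - x)))"
      by (simp add: E_def algebra_simps)
    ultimately have "t * E \<le> t * (c * t * D)"
      using hw aw by linarith
    with t show ?thesis by simp
  qed
  have "E \<le> 0"
  proof (rule field_le_epsilon)
    fix e :: real assume e: "0 < e"
    define t where "t = min 1 (e / (c * D + 1))"
    have t0: "0 < t" "t \<le> 1" using e c D0 by (auto simp: t_def intro!: divide_pos_pos add_nonneg_pos)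
    have "c * t * D = t * (c * D)" by simp
    also have "\<dots> \<le> (e / (c * D + 1)) * (c * D)"
      using c D0 t0 by (intro mult_right_mono) (auto simp: t_def)
    also have "\<dots> \<le> e"
    proof -
      have p: "0 < c * D + 1" using c D0 by (simp add: add_nonneg_pos)
      have "(e / (c * D + 1)) * (c * D) = e * ((c * D) / (c * D + 1))" by simp
      also have "\<dots> \<le> e * 1" using p e by (intro mult_left_mono) auto
      finally show ?thesis by simp
    qed
    finally show "E \<le> 0 + e" using key[OF t0] by simp
  qed
  then show ?thesis by (simp add: E_def inner_add_left algebra_simps)
qed

lemma norm_diff_identity:
  fixes X Y z :: "'a::real_inner"
  shows "(norm (Y - z))\<^sup>2 - (norm (X - z))\<^sup>2 = 2 * ((X - Y) \<bullet> (z - Y)) - (norm (X - Y))\<^sup>2"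
proof -
  have "X - z = (X - Y) + (-1) *\<^sub>R (z - Y)" by (simp add: algebra_simps)
  hence "(norm (X - z))\<^sup>2 = (norm (X - Y))\<^sup>2 - 2 * ((X - Y) \<bullet> (z - Y)) + (norm (z - Y))\<^sup>2"
    using norm_add_sq[of "X - Y" "-1" "z - Y"] by simp
  moreover have "norm (z - Y) = norm (Y - z)" by (rule norm_minus_commute)
  ultimately show ?thesis by simp
qed

theorem theorem1:
  fixes f g :: "'a::euclidean_space \<Rightarrow> real"
    and gf :: "'a \<Rightarrow> 'a"
    and L \<beta> \<mu> :: real
    and xstar x0 :: 'a
    and xt xs ys lam :: "nat \<Rightarrow> 'a"
  assumes f_convex: "convex_on UNIV f"
    and g_convex: "convex_on UNIV g"
    and f_grad: "\<And>x. (f has_derivative (\<lambda>h. gf x \<bullet> h)) (at x)"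
    and L_pos: "L > 0"
    and grad_lip: "L-lipschitz_on UNIV gf"
    and xstar_opt: "\<And>x. f xstar + g xstar \<le> f x + g x"
    and beta: "0 < \<beta>" "\<beta> \<le> 1"
    and mu: "\<beta> / L \<le> \<mu>" "\<mu> \<le> 1 / L"
    and init: "xs 0 = x0" "ys 0 = x0"
    and lam0: "- lam 0 \<in> subdifferential g (ys 0)"
    and step1: "\<And>k x. alm_Q f g \<mu> (lam k) (xt (Suc k)) (ys k) \<le> alm_Q f g \<mu> (lam k) x (ys k)"
    and step2: "\<And>k. xs (Suc k) =
        (if f (xt (Suc k)) + g (xt (Suc k)) > alm_Q f g \<mu> (lam k) (xt (Suc k)) (ys k)
         then ys k else xt (Suc k))"
    and step3: "\<And>k y. alm_Qf f gf g \<mu> (xs (Suc k)) (ys (Suc k)) \<le> alm_Qf f gf g \<mu> (xs (Suc k)) y"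
    and step4: "\<And>k. lam (Suc k) = gf (xs (Suc k)) - (1 / \<mu>) *\<^sub>R (xs (Suc k) - ys (Suc k))"
  shows "(\<forall>k\<ge>1. f (ys k) + g (ys k) - (f xstar + g xstar)
            \<le> (norm (x0 - xstar))\<^sup>2 /
               (2 * \<mu> * (real k + real (card {j. j < k \<and>
                  f (xt (Suc j)) + g (xt (Suc j)) \<le> alm_Q f g \<mu> (lam j) (xt (Suc j)) (ys j)}))))
       \<and> ((\<lambda>k. f (ys k) + g (ys k)) \<longlonglongrightarrow> f xstar + g xstar)
       \<and> (\<forall>\<epsilon>>0. \<forall>k\<ge>1. real k \<ge> L * (norm (x0 - xstar))\<^sup>2 / (2 * \<beta> * \<epsilon>)
            \<longrightarrow> f (ys k) + g (ys k) - (f xstar + g xstar) \<le> \<epsilon>)"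
proof -
  have mu_pos: "\<mu> > 0" using beta L_pos mu by (smt (verit) divide_pos_pos)
  have muL: "\<mu> * L \<le> 1" using mu L_pos by (simp add: field_simps)
  define F where "F = (\<lambda>x. f x + g x)"
  define Fs where "Fs = F xstar"
  define nr where "nr = (\<lambda>j. f (xt (Suc j)) + g (xt (Suc j)) \<le> alm_Q f g \<mu> (lam j) (xt (Suc j)) (ys j))"
  define C where "C = (norm (x0 - xstar))\<^sup>2"
  have Fs_le: "Fs \<le> F x" for x using xstar_opt by (simp add: Fs_def F_def)
  have c2: "2 * (1 / (2 * \<mu>)) = 1 / \<mu>" by simp
  have S: "g z \<ge> g (ys k) + (- lam k) \<bullet> (z - ys k)" for k z
  proof (cases k)
    case 0 then show ?thesis using lam0 by (simp add: subdifferential_def)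
  next
    case (Suc m)
    let ?X = "xs (Suc m)" and ?Y = "ys (Suc m)"
    have opt: "g ?Y + gf ?X \<bullet> ?Y + (1 / (2 * \<mu>)) * (norm (?Y - ?X))\<^sup>2
        \<le> g w + gf ?X \<bullet> w + (1 / (2 * \<mu>)) * (norm (w - ?X))\<^sup>2" for w
      using step3[of m w] by (simp add: alm_Qf_def inner_diff_right)
    have "g z \<ge> g ?Y - (gf ?X + (2 * (1 / (2 * \<mu>))) *\<^sub>R (?Y - ?X)) \<bullet> (z - ?Y)"
      by (rule opt_subgrad[OF g_convex _ opt]) (use mu_pos in simp)
    moreover have "gf ?X + (2 * (1 / (2 * \<mu>))) *\<^sub>R (?Y - ?X) = lam (Suc m)"
      using step4[of m] by (simp add: algebra_simps)
    ultimately show ?thesis using Suc by simp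
  qed
  have Ylem: "2 * \<mu> * (F z - F (ys (Suc k))) \<ge> (norm (ys (Suc k) - z))\<^sup>2 - (norm (xs (Suc k) - z))\<^sup>2" for k z
  proof -
    define X where "X = xs (Suc k)"
    define Y where "Y = ys (Suc k)"
    define P where "P = (X - Y) \<bullet> (z - Y)"
    define N where "N = (norm (X - Y))\<^sup>2"
    have a1: "f z \<ge> f X + gf X \<bullet> (z - X)" by (rule grad_ineq[OF f_convex f_grad])
    have a2: "g z \<ge> g Y + (- lam (Suc k)) \<bullet> (z - Y)" using S[of "Suc k" z] by (simp add: Y_def)
    have a3: "f Y \<le> f X + gf X \<bullet> (Y - X) + L / 2 * (norm (Y - X))\<^sup>2" by (rule descent[OF f_grad grad_lip])
    have "L / 2 * (norm (Y - X))\<^sup>2 \<le> (1 / (2 * \<mu>)) * (norm (Y - X))\<^sup>2"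
      using muL mu_pos by (intro mult_right_mono) (auto simp: field_simps)
    with a3 have a3': "f Y \<le> f X + gf X \<bullet> (Y - X) + (1 / (2 * \<mu>)) * N"
      by (simp add: N_def norm_minus_commute)
    have lamY: "lam (Suc k) \<bullet> (z - Y) = gf X \<bullet> (z - Y) - (1 / \<mu>) * P"
      using step4[of k] by (simp add: X_def Y_def P_def inner_diff_left)
    have e1: "gf X \<bullet> (z - X) - gf X \<bullet> (Y - X) = gf X \<bullet> (z - Y)"
      by (simp add: inner_diff_right)
    have "F z - F Y \<ge> (1 / \<mu>) * P - (1 / (2 * \<mu>)) * N"
      using a1 a2 a3' lamY e1 by (simp add: F_def)
    hence "2 * \<mu> * (F z - F Y) \<ge> 2 * \<mu> * ((1 / \<mu>) * P - (1 / (2 * \<mu>)) * N)"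
      using mu_pos by (intro mult_left_mono) auto
    also have "2 * \<mu> * ((1 / \<mu>) * P - (1 / (2 * \<mu>)) * N) = 2 * P - N"
      using mu_pos by (simp add: field_simps)
    also have "2 * P - N = (norm (Y - z))\<^sup>2 - (norm (X - z))\<^sup>2"
      using norm_diff_identity[of Y z X] by (simp add: P_def N_def)
    finally show ?thesis by (simp add: X_def Y_def)
  qed
  have Xlem: "2 * \<mu> * (F z - F (xs (Suc k))) \<ge> (norm (xs (Suc k) - z))\<^sup>2 - (norm (ys k - z))\<^sup>2"
    if nk: "nr k" for k z
  proof -
    have xe: "xs (Suc k) = xt (Suc k)" using step2[of k] nk by (auto simp: nr_def)
    define X where "X = xt (Suc k)"
    define Y where "Y = ys k"
    define P where "P = (Y - X) \<bullet> (z - X)"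
    define N where "N = (norm (Y - X))\<^sup>2"
    let ?c = "1 / (2 * \<mu>)"
    have opt: "f X + (- lam k) \<bullet> X + ?c * (norm (X - Y))\<^sup>2
        \<le> f w + (- lam k) \<bullet> w + ?c * (norm (w - Y))\<^sup>2" for w
      using step1[of k w] by (simp add: alm_Q_def inner_diff_right X_def Y_def)
    have "f z \<ge> f X - ((- lam k) + (2 * ?c) *\<^sub>R (X - Y)) \<bullet> (z - X)"
      by (rule opt_subgrad[OF f_convex _ opt]) (use mu_pos in simp)
    hence a1: "f z \<ge> f X + lam k \<bullet> (z - X) + (1 / \<mu>) * P"
      by (simp add: P_def inner_add_left algebra_simps inner_diff_left)
    have a2: "g z \<ge> g Y - lam k \<bullet> (z - Y)" using S[of k z] by (simp add: Y_def)
    have a3: "f X + g X \<le> f X + g Y - lam k \<bullet> (X - Y) + ?c * N"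
      using nk by (simp add: nr_def alm_Q_def X_def Y_def N_def norm_minus_commute)
    have e: "lam k \<bullet> (z - X) - lam k \<bullet> (z - Y) + lam k \<bullet> (X - Y) = 0"
      by (simp add: inner_diff_right)
    have "F z - F X \<ge> (1 / \<mu>) * P - ?c * N"
      using a1 a2 a3 e by (simp add: F_def)
    hence "2 * \<mu> * (F z - F X) \<ge> 2 * \<mu> * ((1 / \<mu>) * P - ?c * N)"
      using mu_pos by (intro mult_left_mono) auto
    also have "2 * \<mu> * ((1 / \<mu>) * P - ?c * N) = 2 * P - N"
      using mu_pos by (simp add: field_simps)
    also have "2 * P - N = (norm (X - z))\<^sup>2 - (norm (Y - z))\<^sup>2"
      using norm_diff_identity[of X z Y] by (simp add: P_def N_def)
    finally show ?thesis by (simp add: X_def Y_def xe)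
  qed
  have YX: "F (ys (Suc j)) \<le> F (xs (Suc j))" for j
  proof -
    have "2 * \<mu> * (F (xs (Suc j)) - F (ys (Suc j))) \<ge> 0"
      proof -
        have "(norm (ys (Suc j) - xs (Suc j)))\<^sup>2 \<le> 2 * \<mu> * (F (xs (Suc j)) - F (ys (Suc j)))"
          using Ylem[of j "xs (Suc j)"] by simp
        moreover have "0 \<le> (norm (ys (Suc j) - xs (Suc j)))\<^sup>2" by simp
        ultimately show ?thesis by linarith
      qed
    thus ?thesis using mu_pos by (simp add: zero_le_mult_iff)
  qed
  have XY: "F (xs (Suc j)) \<le> F (ys j)" for j
  proof (cases "nr j")
    case True
    have "2 * \<mu> * (F (ys j) - F (xs (Suc j))) \<ge> 0"
      proof -
        have "(norm (xs (Suc j) - ys j))\<^sup>2 \<le> 2 * \<mu> * (F (ys j) - F (xs (Suc j)))"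
          using Xlem[OF True, of "ys j"] by simp
        moreover have "0 \<le> (norm (xs (Suc j) - ys j))\<^sup>2" by simp
        ultimately show ?thesis by linarith
      qed
    thus ?thesis using mu_pos by (simp add: zero_le_mult_iff)
  next
    case False
    then have "xs (Suc j) = ys j" using step2[of j] by (auto simp: nr_def)
    then show ?thesis by simp
  qed
  have dec: "decseq (\<lambda>j. F (ys j))"
    by (rule decseq_SucI) (use YX XY order_trans in blast)
  define a where "a = (\<lambda>j. (norm (ys j - xstar))\<^sup>2)"
  define T where "T = (\<lambda>j. (F (ys (Suc j)) - Fs) + (if nr j then F (xs (Suc j)) - Fs else 0))"
  have Tj: "2 * \<mu> * T j \<le> a j - a (Suc j)" for j
  proof -
    have y: "2 * \<mu> * (F (ys (Suc j)) - Fs) \<le> (norm (xs (Suc j) - xstar))\<^sup>2 - a (Suc j)"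
      using Ylem[of j xstar] by (simp add: a_def Fs_def algebra_simps)
    show ?thesis
    proof (cases "nr j")
      case True
      have "2 * \<mu> * (F (xs (Suc j)) - Fs) \<le> a j - (norm (xs (Suc j) - xstar))\<^sup>2"
        using Xlem[OF True, of xstar] by (simp add: a_def Fs_def algebra_simps)
      with y True show ?thesis by (simp add: T_def algebra_simps)
    next
      case False
      then have "xs (Suc j) = ys j" using step2[of j] by (auto simp: nr_def)
      with y False show ?thesis by (simp add: T_def a_def)
    qed
  qed
  have main: "F (ys k) - Fs \<le> C / (2 * \<mu> * (real k + real (card {j. j < k \<and> nr j})))"
    if k1: "k \<ge> 1" for k
  proof -
    have "2 * \<mu> * (\<Sum>j<k. T j) = (\<Sum>j<k. 2 * \<mu> * T j)" by (simp add: sum_distrib_left)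
    also have "\<dots> \<le> (\<Sum>j<k. a j - a (Suc j))" by (rule sum_mono) (rule Tj)
    also have "\<dots> = a 0 - a k" by (rule sum_lessThan_telescope')
    also have "\<dots> \<le> C" by (simp add: a_def C_def init)
    finally have sT: "2 * \<mu> * (\<Sum>j<k. T j) \<le> C" .
    define D where "D = F (ys k) - Fs"
    have Tge: "T j \<ge> D * (1 + (if nr j then 1 else 0))" if "j < k" for j
    proof -
      have "F (ys k) \<le> F (ys (Suc j))" using dec that by (simp add: decseq_def)
      moreover have "F (ys (Suc j)) \<le> F (xs (Suc j))" by (rule YX)
      ultimately show ?thesis by (auto simp: T_def D_def)
    qed
    have cnt: "(\<Sum>j<k. (1::real) + (if nr j then 1 else 0)) = real k + real (card {j. j < k \<and> nr j})"
    proof -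
      have "(\<Sum>j<k. (if nr j then 1 else 0::real)) = (\<Sum>j\<in>{..<k} \<inter> {j. nr j}. 1)"
        by (simp add: sum.If_cases)
      also have "\<dots> = real (card ({..<k} \<inter> {j. nr j}))" by simp
      also have "{..<k} \<inter> {j. nr j} = {j. j < k \<and> nr j}" by auto
      finally show ?thesis by (simp add: sum.distrib)
    qed
    have "D * (real k + real (card {j. j < k \<and> nr j})) = (\<Sum>j<k. D * (1 + (if nr j then 1 else 0)))"
      by (simp add: sum_distrib_left[symmetric] cnt)
    also have "\<dots> \<le> (\<Sum>j<k. T j)" by (rule sum_mono) (use Tge in auto)
    finally have "2 * \<mu> * (D * (real k + real (card {j. j < k \<and> nr j}))) \<le> C"
      using sT mu_pos by (smt (verit) mult_left_mono)
    moreover have "2 * \<mu> * (real k + real (card {j. j < k \<and> nr j})) > 0" using mu_pos k1 by simp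
    ultimately show ?thesis by (simp add: D_def pos_le_divide_eq mult.commute mult.left_commute)
  qed
  have main2: "F (ys k) - Fs \<le> C / (2 * \<mu> * real k)" if k1: "k \<ge> 1" for k
  proof -
    have "C \<ge> 0" by (simp add: C_def)
    moreover have "0 < 2 * \<mu> * real k" using mu_pos k1 by simp
    moreover have "2 * \<mu> * real k \<le> 2 * \<mu> * (real k + real (card {j. j < k \<and> nr j}))" using mu_pos by simp
    moreover have "0 < 2 * \<mu> * (real k + real (card {j. j < k \<and> nr j}))" using mu_pos k1 by simp
    ultimately have "C / (2 * \<mu> * (real k + real (card {j. j < k \<and> nr j}))) \<le> C / (2 * \<mu> * real k)"
      using mu_pos k1 by (intro divide_left_mono mult_pos_pos) auto
    with main[OF k1] show ?thesis by linarith
  qed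
  have P1: "\<forall>k\<ge>1. F (ys k) - Fs \<le> C / (2 * \<mu> * (real k + real (card {j. j < k \<and> nr j})))"
    using main by blast
  have P2: "(\<lambda>k. F (ys k)) \<longlonglongrightarrow> Fs"
  proof -
    have lim0: "(\<lambda>k. (C / (2 * \<mu>)) / real k) \<longlonglongrightarrow> 0" by (rule lim_const_over_n)
    have "(\<lambda>k. F (ys k) - Fs) \<longlonglongrightarrow> 0"
    proof (rule tendsto_sandwich[OF _ _ tendsto_const lim0])
      show "\<forall>\<^sub>F k in sequentially. 0 \<le> F (ys k) - Fs" using Fs_le by simp
      show "\<forall>\<^sub>F k in sequentially. F (ys k) - Fs \<le> C / (2 * \<mu>) / real k"
        using eventually_ge_at_top[of 1] by eventually_elim (use main2 in simp)
    qed
    hence "(\<lambda>k. F (ys k) - Fs + Fs) \<longlonglongrightarrow> 0 + Fs" by (intro tendsto_add tendsto_const)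
    thus ?thesis by simp
  qed
  have P3: "\<forall>\<epsilon>>0. \<forall>k\<ge>1. real k \<ge> L * C / (2 * \<beta> * \<epsilon>) \<longrightarrow> F (ys k) - Fs \<le> \<epsilon>"
  proof (intro allI impI)
    fix \<epsilon> :: real and k :: nat
    assume e: "\<epsilon> > 0" and k1: "k \<ge> 1" and kb: "real k \<ge> L * C / (2 * \<beta> * \<epsilon>)"
    have be: "2 * \<beta> * \<epsilon> > 0" using e beta by simp
    have h1: "L * C \<le> 2 * \<beta> * \<epsilon> * real k" using kb be by (simp add: pos_divide_le_eq mult.commute)
    have bmu: "\<beta> \<le> \<mu> * L" using mu L_pos by (simp add: field_simps)
    have "2 * \<beta> * \<epsilon> * real k \<le> 2 * (\<mu> * L) * \<epsilon> * real k"
      using bmu e by (intro mult_right_mono) auto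
    with h1 have "L * C \<le> L * (2 * \<mu> * real k * \<epsilon>)" by (simp add: algebra_simps)
    hence hC: "C \<le> 2 * \<mu> * real k * \<epsilon>" using L_pos by simp
    have "0 < 2 * \<mu> * real k" using mu_pos k1 by simp
    hence "C / (2 * \<mu> * real k) \<le> \<epsilon>" using hC by (simp add: divide_le_eq mult.commute)
    with main2[OF k1] show "F (ys k) - Fs \<le> \<epsilon>" by linarith
  qed
  show ?thesis using P1 P2 P3 by (simp add: F_def Fs_def nr_def C_def)
qed

end
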